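(* Let $0<c_1\le c_2$ be constants, let $n$ be sufficiently large, let $t\in[1,n^{0.1}]$, and let $H$ be an undirected graph on $n$ vertices in which every vertex has degree between $c_1t$ and $c_2t$ and which has no cycle of length at most $8$. Then any two distinct maximal cliques of $H^2$ have at most one vertex in common.
   Context: $H^2$ (the square of $H$) is the graph on the vertex set of $H$ in which $u\neq v$ are adjacent if and only if there is a path of length exactly $2$ between $u$ and $v$ in $H$. *)

theory Defs
  imports Complex_Main
begin

definition simple_graph :: "'a set \<Rightarrow> ('a \<Rightarrow> 'a \<Rightarrow> bool) \<Rightarrow> bool" where
  "simple_graph V E \<longleftrightarrow> finite V \<and> (\<forall>u v. E u v \<longrightarrow> u \<in> V \<and> v \<in> V)
     \<and> (\<forall>u v. E u v \<longrightarrow> E v u) \<and> (\<forall>v. \<not> E v v)"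

definition degree :: "'a set \<Rightarrow> ('a \<Rightarrow> 'a \<Rightarrow> bool) \<Rightarrow> 'a \<Rightarrow> nat" where
  "degree V E v = card {u \<in> V. E v u}"

definition has_cycle_of_length :: "'a set \<Rightarrow> ('a \<Rightarrow> 'a \<Rightarrow> bool) \<Rightarrow> nat \<Rightarrow> bool" where
  "has_cycle_of_length V E k \<longleftrightarrow> k \<ge> 3 \<and> (\<exists>c :: nat \<Rightarrow> 'a.
      (\<forall>i<k. c i \<in> V) \<and> inj_on c {..<k} \<and> (\<forall>i<k. E (c i) (c (Suc i mod k))))"

definition square_adj :: "'a set \<Rightarrow> ('a \<Rightarrow> 'a \<Rightarrow> bool) \<Rightarrow> 'a \<Rightarrow> 'a \<Rightarrow> bool" where
  "square_adj V E u v \<longleftrightarrow> u \<in> V \<and> v \<in> V \<and> u \<noteq> v \<and> (\<exists>w\<in>V. E u w \<and> E w v)"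

definition is_clique :: "'a set \<Rightarrow> ('a \<Rightarrow> 'a \<Rightarrow> bool) \<Rightarrow> 'a set \<Rightarrow> bool" where
  "is_clique V A K \<longleftrightarrow> K \<subseteq> V \<and> (\<forall>u\<in>K. \<forall>v\<in>K. u \<noteq> v \<longrightarrow> A u v)"

definition is_maximal_clique :: "'a set \<Rightarrow> ('a \<Rightarrow> 'a \<Rightarrow> bool) \<Rightarrow> 'a set \<Rightarrow> bool" where
  "is_maximal_clique V A K \<longleftrightarrow> is_clique V A K \<and> (\<forall>K'. is_clique V A K' \<and> K \<subseteq> K' \<longrightarrow> K' = K)"

end

theory Submission
  imports Defs
begin

lemma cyc:
  assumes "distinct xs" "length xs = k" "k \<ge> 3" "set xs \<subseteq> V"
    "\<forall>i<k. E (xs!i) (xs!(Suc i mod k))"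
  shows "has_cycle_of_length V E k"
  unfolding has_cycle_of_length_def
  using assms by (auto intro!: exI[of _ "nth xs"] inj_on_nth)

lemma L3: "(i::nat) < 3 \<Longrightarrow> i = 0 \<or> i = 1 \<or> i = 2" by arith
lemma L4: "(i::nat) < 4 \<Longrightarrow> i = 0 \<or> i = 1 \<or> i = 2 \<or> i = 3" by arith
lemma L6: "(i::nat) < 6 \<Longrightarrow> i = 0 \<or> i = 1 \<or> i = 2 \<or> i = 3 \<or> i = 4 \<or> i = 5" by arith

lemma key:
  assumes sg: "simple_graph V E" and nc: "\<forall>k\<le>8. \<not> has_cycle_of_length V E k"
    and uv: "u \<noteq> v" and ux: "E u x" and xv: "E x v"
    and Kc: "is_clique V (square_adj V E) K" and uK: "u \<in> K" and vK: "v \<in> K"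
  shows "K \<subseteq> {y\<in>V. E x y}"
proof
  have sym: "\<And>p q. E p q \<Longrightarrow> E q p" and irr: "\<And>p. \<not> E p p"
    and inV: "\<And>p q. E p q \<Longrightarrow> p \<in> V \<and> q \<in> V"
    using sg unfolding simple_graph_def by blast+
  have tri: False if "E p q" "E q r" "E r p" for p q r
  proof -
    have "distinct [p,q,r]" using that irr by auto
    moreover have "\<forall>i<3. E ([p,q,r]!i) ([p,q,r]!(Suc i mod 3))"
      by (intro allI impI, drule L3, elim disjE) (simp_all add: that)
    ultimately have "has_cycle_of_length V E 3"
      using that inV by (intro cyc[where xs="[p,q,r]"]) auto
    then show False using nc by auto
  qed
  have sq: "\<And>p q. p \<in> K \<Longrightarrow> q \<in> K \<Longrightarrow> p \<noteq> q \<Longrightarrow> \<exists>a\<in>V. E p a \<and> E a q"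
    using Kc unfolding is_clique_def square_adj_def by blast
  fix w assume wK: "w \<in> K"
  have wV: "w \<in> V" using Kc wK unfolding is_clique_def by blast
  show "w \<in> {y\<in>V. E x y}"
  proof (cases "w = u \<or> w = v")
    case True then show ?thesis using ux xv sym wV by auto
  next
    case False
    obtain a where a: "a \<in> V" "E u a" "E a w" using sq[OF uK wK] False by metis
    obtain b where b: "b \<in> V" "E v b" "E b w" using sq[OF vK wK] False by metis
    show ?thesis
    proof (rule ccontr)
      assume nxw: "w \<notin> {y\<in>V. E x y}"
      then have "a \<noteq> x" "b \<noteq> x" using a b wV by auto
      show False
      proof (cases "a = b")
        case True
        have d: "distinct [u,x,v,a]" using uv \<open>a \<noteq> x\<close> irr ux xv a b True by (auto dest: tri)
        have "\<forall>i<4. E ([u,x,v,a]!i) ([u,x,v,a]!(Suc i mod 4))"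
          by (intro allI impI, drule L4, elim disjE) (simp_all add: ux xv a b \<open>a = b\<close> sym[OF a(2)[unfolded \<open>a = b\<close>]])
        then have "has_cycle_of_length V E 4"
          using d inV ux xv a(1) by (intro cyc[where xs="[u,x,v,a]"]) auto
        then show False using nc by auto
      next
        case False
        have "x \<noteq> w" using tri[of u a w] a ux nxw wV sym by auto
        moreover have "a \<noteq> v" using tri[of u x v] ux xv a sym by auto
        moreover have "b \<noteq> u" using tri[of u x v] ux xv b sym by auto
        ultimately have d: "distinct [u,x,v,b,w,a]" using uv \<open>a \<noteq> x\<close> \<open>b \<noteq> x\<close> False irr ux xv a b
            \<open>\<not> (w = u \<or> w = v)\<close> by auto
        have "\<forall>i<6. E ([u,x,v,b,w,a]!i) ([u,x,v,b,w,a]!(Suc i mod 6))"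
          by (intro allI impI, drule L6, elim disjE) (simp_all add: ux xv a b sym[OF a(2)] sym[OF a(3)])
        then have "has_cycle_of_length V E 6"
          using d inV ux xv a b wV by (intro cyc[where xs="[u,x,v,b,w,a]"]) auto
        then show False using nc by auto
      qed
    qed
  qed
qed

theorem lemmaA4:
  fixes c1 c2 :: real
  assumes "0 < c1" and "c1 \<le> c2"
  shows "\<exists>N::nat. \<forall>n\<ge>N. \<forall>t::real. \<forall>(V::nat set) E.
     1 \<le> t \<and> t \<le> real n powr 0.1 \<and>
     simple_graph V E \<and> card V = n \<and>
     (\<forall>v\<in>V. c1 * t \<le> real (degree V E v) \<and> real (degree V E v) \<le> c2 * t) \<and>
     (\<forall>k\<le>8. \<not> has_cycle_of_length V E k)
     \<longrightarrow> (\<forall>K1 K2. is_maximal_clique V (square_adj V E) K1 \<and>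
                  is_maximal_clique V (square_adj V E) K2 \<and> K1 \<noteq> K2
                  \<longrightarrow> card (K1 \<inter> K2) \<le> 1)"
proof (intro exI[of _ 0] allI impI)
  fix n t and V :: "nat set" and E K1 K2
  assume H: "1 \<le> t \<and> t \<le> real n powr 0.1 \<and>
     simple_graph V E \<and> card V = n \<and>
     (\<forall>v\<in>V. c1 * t \<le> real (degree V E v) \<and> real (degree V E v) \<le> c2 * t) \<and>
     (\<forall>k\<le>8. \<not> has_cycle_of_length V E k)"
    and M: "is_maximal_clique V (square_adj V E) K1 \<and>
                  is_maximal_clique V (square_adj V E) K2 \<and> K1 \<noteq> K2"
  have sg: "simple_graph V E" and nc: "\<forall>k\<le>8. \<not> has_cycle_of_length V E k" using H by auto
  show "card (K1 \<inter> K2) \<le> 1"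
  proof (rule ccontr)
    assume "\<not> card (K1 \<inter> K2) \<le> 1"
    then have "2 \<le> card (K1 \<inter> K2)" by simp
    then obtain u v where uv: "u \<in> K1 \<inter> K2" "v \<in> K1 \<inter> K2" "u \<noteq> v"
      by (metis card_2_iff' obtain_subset_with_card_n subset_iff)
    have c1: "is_clique V (square_adj V E) K1" and c2: "is_clique V (square_adj V E) K2"
      using M unfolding is_maximal_clique_def by auto
    obtain x where x: "x \<in> V" "E u x" "E x v"
      using c1 uv unfolding is_clique_def square_adj_def by blast
    let ?N = "{y\<in>V. E x y}"
    have Nc: "is_clique V (square_adj V E) ?N"
      using sg unfolding is_clique_def square_adj_def simple_graph_def by blast
    have "K1 = ?N" using M Nc key[OF sg nc uv(3) x(2,3) c1] uv unfolding is_maximal_clique_def by blast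
    moreover have "K2 = ?N" using M Nc key[OF sg nc uv(3) x(2,3) c2] uv unfolding is_maximal_clique_def by blast
    ultimately show False using M by simp
  qed
qed

end
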